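(* Let $L$ be an i--lattice. If ${\rm Con}(L)$ is a Boolean algebra, then ${\rm Con}_{\mathbb{I}}(L)$ is a Boolean subalgebra of ${\rm Con}(L)$.
   Context: An i--lattice is a lattice $L$ with a unary operation $'$ such that $a''=a$ and $a\leq b$ implies $b'\leq a'$ for all $a,b\in L$. ${\rm Con}(L)$ is the lattice of lattice congruences of $L$, and ${\rm Con}_{\mathbb{I}}(L)$ is the set of lattice congruences $\theta$ that also preserve the involution, i.e. $(a,b)\in\theta$ implies $(a',b')\in\theta$ (it is a sublattice of ${\rm Con}(L)$). *)

theory Defs
  imports Main
begin

definition i_lattice :: "('a::lattice \<Rightarrow> 'a) \<Rightarrow> bool" where
  "i_lattice f \<longleftrightarrow> (\<forall>a. f (f a) = a) \<and> (\<forall>a b. a \<le> b \<longrightarrow> f b \<le> f a)"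

definition lat_con :: "('a::lattice \<times> 'a) set \<Rightarrow> bool" where
  "lat_con \<theta> \<longleftrightarrow> equiv UNIV \<theta> \<and>
     (\<forall>a b c d. (a, b) \<in> \<theta> \<and> (c, d) \<in> \<theta> \<longrightarrow>
        (inf a c, inf b d) \<in> \<theta> \<and> (sup a c, sup b d) \<in> \<theta>)"

definition Con :: "('a::lattice \<times> 'a) set set" where
  "Con = {\<theta>. lat_con \<theta>}"

definition Con_I :: "('a::lattice \<Rightarrow> 'a) \<Rightarrow> ('a \<times> 'a) set set" where
  "Con_I f = {\<theta> \<in> Con. \<forall>a b. (a, b) \<in> \<theta> \<longrightarrow> (f a, f b) \<in> \<theta>}"

definition con_meet :: "('a::lattice \<times> 'a) set \<Rightarrow> ('a \<times> 'a) set \<Rightarrow> ('a \<times> 'a) set" where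
  "con_meet \<theta> \<phi> = \<theta> \<inter> \<phi>"

definition con_join :: "('a::lattice \<times> 'a) set \<Rightarrow> ('a \<times> 'a) set \<Rightarrow> ('a \<times> 'a) set" where
  "con_join \<theta> \<phi> = \<Inter> {\<psi> \<in> Con. \<theta> \<union> \<phi> \<subseteq> \<psi>}"

definition con_complement :: "('a::lattice \<times> 'a) set \<Rightarrow> ('a \<times> 'a) set \<Rightarrow> bool" where
  "con_complement \<theta> \<phi> \<longleftrightarrow> con_meet \<theta> \<phi> = Id \<and> con_join \<theta> \<phi> = UNIV"

definition Con_boolean :: "'a::lattice itself \<Rightarrow> bool" where
  "Con_boolean _ \<longleftrightarrow>
     (\<forall>\<theta> \<in> (Con :: ('a \<times> 'a) set set). \<forall>\<phi> \<in> Con. \<forall>\<psi> \<in> Con.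
        con_meet \<theta> (con_join \<phi> \<psi>) = con_join (con_meet \<theta> \<phi>) (con_meet \<theta> \<psi>)) \<and>
     (\<forall>\<theta> \<in> (Con :: ('a \<times> 'a) set set). \<exists>\<phi> \<in> Con. con_complement \<theta> \<phi>)"

definition boolean_subalgebra_of_Con :: "('a::lattice \<times> 'a) set set \<Rightarrow> bool" where
  "boolean_subalgebra_of_Con S \<longleftrightarrow>
     S \<subseteq> Con \<and> Id \<in> S \<and> UNIV \<in> S \<and>
     (\<forall>\<theta> \<in> S. \<forall>\<phi> \<in> S. con_meet \<theta> \<phi> \<in> S \<and> con_join \<theta> \<phi> \<in> S) \<and>
     (\<forall>\<theta> \<in> S. \<forall>\<phi> \<in> Con. con_complement \<theta> \<phi> \<longrightarrow> \<phi> \<in> S)"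

end

theory Submission
  imports Defs
begin

lemma il_inv: "i_lattice f \<Longrightarrow> f (f a) = a" by (simp add: i_lattice_def)
lemma il_anti: "i_lattice f \<Longrightarrow> a \<le> b \<Longrightarrow> f b \<le> f a" by (simp add: i_lattice_def)

lemma il_inf: assumes "i_lattice f" shows "f (inf a b) = sup (f a) (f b)"
proof (rule antisym)
  have "f (sup (f a) (f b)) \<le> inf a b"
    using il_anti[OF assms, of "f a" "sup (f a) (f b)"] il_anti[OF assms, of "f b" "sup (f a) (f b)"]
      il_inv[OF assms] by simp
  then have "f (inf a b) \<le> f (f (sup (f a) (f b)))" using il_anti[OF assms] by blast
  then show "f (inf a b) \<le> sup (f a) (f b)" using il_inv[OF assms] by simp
  show "sup (f a) (f b) \<le> f (inf a b)" using il_anti[OF assms] by simp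
qed

lemma il_sup: assumes "i_lattice f" shows "f (sup a b) = inf (f a) (f b)"
proof -
  have "f (inf (f a) (f b)) = sup a b" using il_inf[OF assms] il_inv[OF assms] by simp
  then have "f (f (inf (f a) (f b))) = f (sup a b)" by simp
  then show ?thesis using il_inv[OF assms] by simp
qed

definition img :: "('a \<Rightarrow> 'a) \<Rightarrow> ('a \<times> 'a) set \<Rightarrow> ('a \<times> 'a) set" where
  "img f \<psi> = {(a, b). (f a, f b) \<in> \<psi>}"

lemma img_mem: "(a, b) \<in> img f \<psi> \<longleftrightarrow> (f a, f b) \<in> \<psi>" by (simp add: img_def)

lemma con_equivD:
  assumes "lat_con \<psi>"
  shows "(a,a) \<in> \<psi>" "(a,b) \<in> \<psi> \<Longrightarrow> (b,a) \<in> \<psi>" "(a,b) \<in> \<psi> \<Longrightarrow> (b,c) \<in> \<psi> \<Longrightarrow> (a,c) \<in> \<psi>"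
proof -
  have e: "equiv UNIV \<psi>" using assms by (simp add: lat_con_def)
  show "(a,a) \<in> \<psi>" using e by (simp add: equiv_def refl_on_def)
  show "(a,b) \<in> \<psi> \<Longrightarrow> (b,a) \<in> \<psi>" using e by (metis equiv_def symD)
  show "(a,b) \<in> \<psi> \<Longrightarrow> (b,c) \<in> \<psi> \<Longrightarrow> (a,c) \<in> \<psi>" using e by (metis equiv_def transD)
qed

lemma con_compat:
  assumes "lat_con \<psi>" "(a,b) \<in> \<psi>" "(c,d) \<in> \<psi>"
  shows "(inf a c, inf b d) \<in> \<psi>" "(sup a c, sup b d) \<in> \<psi>"
  using assms unfolding lat_con_def by blast+

lemma con_intro:
  assumes "\<And>a. (a,a) \<in> \<psi>" "\<And>a b. (a,b) \<in> \<psi> \<Longrightarrow> (b,a) \<in> \<psi>"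
    "\<And>a b c. (a,b) \<in> \<psi> \<Longrightarrow> (b,c) \<in> \<psi> \<Longrightarrow> (a,c) \<in> \<psi>"
    "\<And>a b c d. (a,b) \<in> \<psi> \<Longrightarrow> (c,d) \<in> \<psi> \<Longrightarrow> (inf a c, inf b d) \<in> \<psi> \<and> (sup a c, sup b d) \<in> \<psi>"
  shows "lat_con \<psi>"
  unfolding lat_con_def equiv_def
proof (intro conjI allI impI)
  show "refl_on UNIV \<psi>" using assms(1) by (auto simp: refl_on_def)
  show "sym \<psi>" using assms(2) by (auto intro: symI)
  show "trans \<psi>" using assms(3) by (auto intro: transI)
qed (use assms(4) in auto)

lemma img_con:
  assumes il: "i_lattice f" and c: "lat_con \<psi>"
  shows "lat_con (img f \<psi>)"
  apply (rule con_intro)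
  unfolding img_mem il_inf[OF il] il_sup[OF il]
  using con_equivD[OF c] con_compat[OF c] by blast+

lemma img_img: "i_lattice f \<Longrightarrow> img f (img f \<psi>) = \<psi>"
  by (auto simp: img_def il_inv)

lemma Con_I_img: "\<theta> \<in> Con_I f \<Longrightarrow> i_lattice f \<Longrightarrow> \<theta> \<subseteq> img f \<theta>"
  by (auto simp: Con_I_def img_def)

lemma Con_I_iff: "\<theta> \<in> Con \<Longrightarrow> \<theta> \<subseteq> img f \<theta> \<Longrightarrow> \<theta> \<in> Con_I f"
  by (auto simp: Con_I_def img_def)

lemma join_mem: "(a,b) \<in> con_join \<theta> \<phi> \<longleftrightarrow> (\<forall>\<psi> \<in> Con. \<theta> \<union> \<phi> \<subseteq> \<psi> \<longrightarrow> (a,b) \<in> \<psi>)"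
  by (auto simp: con_join_def)

lemma join_Con: "con_join \<theta> \<phi> \<in> Con"
  unfolding Con_def mem_Collect_eq
  apply (rule con_intro)
  unfolding join_mem Con_def mem_Collect_eq Ball_def
  apply (blast intro: con_equivD)
  apply (blast intro: con_equivD)
  apply (blast intro: con_equivD)
  by (blast intro: con_compat)

lemma join_Id: "\<chi> \<in> Con \<Longrightarrow> con_join Id \<chi> = \<chi>"
  unfolding con_join_def Con_def using con_equivD(1) by fastforce

lemma Id_Con: "Id \<in> Con" unfolding Con_def mem_Collect_eq by (rule con_intro) auto
lemma UNIV_Con: "UNIV \<in> Con" unfolding Con_def mem_Collect_eq by (rule con_intro) auto

theorem proposition4p8:
  fixes f :: "'a::lattice \<Rightarrow> 'a"
  assumes "i_lattice f"
    and "Con_boolean TYPE('a)"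
  shows "boolean_subalgebra_of_Con (Con_I f)"
proof -
  note il = assms(1)
  have imgC: "\<psi> \<in> Con \<Longrightarrow> img f \<psi> \<in> Con" for \<psi> using img_con[OF il] by (simp add: Con_def)
  have distr: "\<And>\<theta> \<phi> \<psi>. (\<theta> :: ('a \<times> 'a) set) \<in> Con \<Longrightarrow> \<phi> \<in> Con \<Longrightarrow> \<psi> \<in> Con \<Longrightarrow>
        con_meet \<theta> (con_join \<phi> \<psi>) = con_join (con_meet \<theta> \<phi>) (con_meet \<theta> \<psi>)"
    using assms(2) unfolding Con_boolean_def by blast
  have s1: "Con_I f \<subseteq> Con" by (auto simp: Con_I_def)
  have s2: "Id \<in> Con_I f" using Id_Con by (auto simp: Con_I_def)
  have s3: "UNIV \<in> Con_I f" using UNIV_Con by (auto simp: Con_I_def)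
  have joinI: "con_join \<theta> \<phi> \<in> Con_I f" if "\<theta> \<in> Con_I f" "\<phi> \<in> Con_I f" for \<theta> \<phi>
  proof (rule Con_I_iff[OF join_Con], rule subrelI)
    fix a b assume ab: "(a,b) \<in> con_join \<theta> \<phi>"
    show "(a,b) \<in> img f (con_join \<theta> \<phi>)" unfolding img_mem join_mem
    proof (intro ballI impI)
      fix \<psi> assume p: "\<psi> \<in> Con" "\<theta> \<union> \<phi> \<subseteq> \<psi>"
      have "\<theta> \<union> \<phi> \<subseteq> img f \<psi>" using p(2) that
        by (auto simp: Con_I_def img_def)
      then have "(a,b) \<in> img f \<psi>" using ab imgC[OF p(1)] by (auto simp: join_mem)
      then show "(f a, f b) \<in> \<psi>" by (simp add: img_mem)
    qed
  qed
  have meetI: "con_meet \<theta> \<phi> \<in> Con_I f" if "\<theta> \<in> Con_I f" "\<phi> \<in> Con_I f" for \<theta> \<phi>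
  proof -
    have "con_meet \<theta> \<phi> \<in> Con" using that s1 unfolding Con_def con_meet_def
      by (simp only: mem_Collect_eq, intro con_intro) (auto dest: con_equivD con_compat)
    then show ?thesis using that by (auto simp: Con_I_def con_meet_def)
  qed
  have compI: "\<phi> \<in> Con_I f" if th: "\<theta> \<in> Con_I f" and ph: "\<phi> \<in> Con" and cp: "con_complement \<theta> \<phi>" for \<theta> \<phi>
  proof -
    let ?p = "img f \<phi>"
    have thC: "\<theta> \<in> Con" using th s1 by blast
    have pC: "?p \<in> Con" using imgC[OF ph] .
    have m1: "\<theta> \<inter> \<phi> = Id" and j1: "con_join \<theta> \<phi> = UNIV" using cp by (auto simp: con_complement_def con_meet_def)
    have m2: "\<phi> \<inter> ?p \<subseteq> \<phi> \<inter> \<theta> \<union> \<phi> \<inter> ?p" by blast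
    have j2: "con_join \<theta> ?p = UNIV"
    proof -
      { fix a b
        have "(a,b) \<in> con_join \<theta> ?p" unfolding join_mem
        proof (intro ballI impI)
          fix \<psi> assume p: "\<psi> \<in> Con" "\<theta> \<union> ?p \<subseteq> \<psi>"
          have "\<theta> \<union> \<phi> \<subseteq> img f \<psi>" using p(2) th il
            by (auto simp: Con_I_def img_def il_inv)
          then have "(f a, f b) \<in> img f \<psi>" using j1 imgC[OF p(1)] join_mem
            by (metis UNIV_I)
          then show "(a,b) \<in> \<psi>" using il by (simp add: img_mem il_inv)
        qed }
      then show ?thesis by auto
    qed
    have "\<phi> = con_meet \<phi> (con_join \<theta> ?p)" using j2 by (simp add: con_meet_def)
    also have "\<dots> = con_join (con_meet \<phi> \<theta>) (con_meet \<phi> ?p)" using distr[OF ph thC pC] .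
    also have "con_meet \<phi> \<theta> = Id" using m1 by (auto simp: con_meet_def)
    also have "con_join Id (con_meet \<phi> ?p) = con_meet \<phi> ?p"
    proof (rule join_Id)
      show "con_meet \<phi> ?p \<in> Con" using ph pC unfolding Con_def con_meet_def
        by (simp only: mem_Collect_eq, intro con_intro) (auto dest: con_equivD con_compat)
    qed
    finally have "\<phi> \<subseteq> ?p" by (auto simp: con_meet_def)
    then show ?thesis using Con_I_iff[OF ph] by blast
  qed
  show ?thesis unfolding boolean_subalgebra_of_Con_def
    using s1 s2 s3 joinI meetI compI by blast
qed

end
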